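(* Let $\mathbb{N}$ be a strongly connected directed graph on vertices $\{1,\dots,m\}$, let $\mathcal{J}=\{ij: i\in\{1,\dots,m\},\ j\in\bar{\mathcal{N}}_i\}$ be its set of arcs ($ij$ denoting the arc from $j$ to $i$, $\bar{\mathcal{N}}_i$ the set of $j\neq i$ with such an arc), let $b_i$ be the $i$-th unit vector of $\mathbb{R}^m$, and let $c_{ij}\in\mathbb{R}^{1\times m}$ have entry $-1$ in position $i$, $+1$ in position $j$, and zeros elsewhere. Consider the $|\mathcal{J}|$-channel system $$\dot z=\sum_{ij\in\mathcal{J}}b_iv_{ij},\qquad w_{ij}=c_{ij}z,\quad ij\in\mathcal{J},$$ with state $z\in\mathbb{R}^m$, in which channel $ij$ has input matrix $b_i$ and output matrix $c_{ij}$. Then every complementary subsystem of this system is complete.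
   Context: For a nonempty proper subset $\mathcal{C}\subset\mathcal{J}$ with complement $\bar{\mathcal{C}}=\mathcal{J}\setminus\mathcal{C}$, the complementary subsystem determined by $\mathcal{C}$ is the triple $(\mathbf{C},0_{m\times m},\mathbf{B})$ with $\mathbf{B}$ the block row of the $b_i$, $ij\in\mathcal{C}$, and $\mathbf{C}$ the block column of the $c_{ij}$, $ij\in\bar{\mathcal{C}}$. It is complete if its transfer matrix $\mathbf{C}(sI)^{-1}\mathbf{B}$ is nonzero and the pencil $\begin{bmatrix}\lambda I&\mathbf{B}\\ \mathbf{C}&0\end{bmatrix}$ has rank at least $m$ for every complex $\lambda$. *)

theory Defs
  imports "Jordan_Normal_Form.DL_Rank" "HOL-Library.Product_Lexorder"
begin

text \<open>Vertices are 0..m-1 (the paper's 1..m shifted by one).  The arc set J is a set of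
  pairs (i,j), where the pair (i,j) stands for the paper's arc ij, i.e. the arc from j to i.\<close>

definition strongly_connected :: "nat \<Rightarrow> (nat \<times> nat) set \<Rightarrow> bool" where
  "strongly_connected m J \<longleftrightarrow> (\<forall>u<m. \<forall>v<m. (u, v) \<in> J\<^sup>*)"

definition b_vec :: "nat \<Rightarrow> nat \<Rightarrow> complex vec" where
  "b_vec m i = unit_vec m i"

definition c_row :: "nat \<Rightarrow> nat \<Rightarrow> nat \<Rightarrow> complex vec" where
  "c_row m i j = vec m (\<lambda>k. if k = i then -1 else if k = j then 1 else 0)"

definition B_mat :: "nat \<Rightarrow> (nat \<times> nat) list \<Rightarrow> complex mat" where
  "B_mat m cs = mat_of_cols m (map (\<lambda>(i, j). b_vec m i) cs)"

definition C_mat :: "nat \<Rightarrow> (nat \<times> nat) list \<Rightarrow> complex mat" where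
  "C_mat m ds = mat_of_rows m (map (\<lambda>(i, j). c_row m i j) ds)"

definition transfer_mat :: "nat \<Rightarrow> complex mat \<Rightarrow> complex mat \<Rightarrow> complex \<Rightarrow> complex mat" where
  "transfer_mat m Cm Bm s = Cm * (inverse s \<cdot>\<^sub>m 1\<^sub>m m) * Bm"

definition pencil :: "nat \<Rightarrow> complex mat \<Rightarrow> complex mat \<Rightarrow> complex \<Rightarrow> complex mat" where
  "pencil m Cm Bm l = four_block_mat (l \<cdot>\<^sub>m 1\<^sub>m m) Bm Cm (0\<^sub>m (dim_row Cm) (dim_col Bm))"

text \<open>Completeness of a triple (C, 0_{m x m}, B) with state dimension m: the transfer
  matrix (a rational matrix function of s) is not identically zero, and the pencil has rank
  at least m for every complex lambda.\<close>
definition complete_triple :: "nat \<Rightarrow> complex mat \<Rightarrow> complex mat \<Rightarrow> bool" where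
  "complete_triple m Cm Bm \<longleftrightarrow>
     (\<exists>s. s \<noteq> 0 \<and> transfer_mat m Cm Bm s \<noteq> 0\<^sub>m (dim_row Cm) (dim_col Bm)) \<and>
     (\<forall>l. vec_space.rank (m + dim_row Cm) (pencil m Cm Bm l) \<ge> m)"

definition complementary_complete :: "nat \<Rightarrow> (nat \<times> nat) set \<Rightarrow> (nat \<times> nat) set \<Rightarrow> bool" where
  "complementary_complete m J Cs \<longleftrightarrow>
     complete_triple m (C_mat m (sorted_list_of_set (J - Cs))) (B_mat m (sorted_list_of_set Cs))"

end

theory Submission
  imports Defs
begin

lemma rank_ge_sel:
  fixes A :: "'a::field mat"
  assumes A: "A \<in> carrier_mat n nc" and f: "\<forall>i<k. f i < nc"
  and inj: "\<And>v. v \<in> carrier_vec k \<Longrightarrow> (\<And>r. r<n \<Longrightarrow> (\<Sum>i<k. A$$(r, f i) * v$i) = 0) \<Longrightarrow> v = 0\<^sub>v k"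
  shows "k \<le> vec_space.rank n A"
proof -
  interpret vec_space "TYPE('a)" n .
  define M where "M = mat n k (\<lambda>(r,i). A$$(r, f i))"
  have M: "M \<in> carrier_mat n k" unfolding M_def by simp
  have Mv: "v = 0\<^sub>v k" if "v \<in> carrier_vec k" "M *\<^sub>v v = 0\<^sub>v n" for v
  proof (rule inj[OF that(1)])
    fix r assume r: "r < n"
    have "(M *\<^sub>v v) $ r = 0" using that(2) r by simp
    moreover have "(M *\<^sub>v v) $ r = (\<Sum>i<k. A$$(r, f i) * v$i)"
      using r that(1) unfolding M_def by (auto simp: mult_mat_vec_def scalar_prod_def lessThan_atLeast0 intro!: sum.cong)
    ultimately show "(\<Sum>i<k. A$$(r, f i) * v$i) = 0" by simp
  qed
  have colM: "col M i = col A (f i)" if "i < k" for i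
    using that A f unfolding M_def by (auto simp: col_def)
  have dist: "distinct (cols M)"
  proof (rule ccontr)
    assume "\<not> distinct (cols M)"
    then obtain i j where ij: "i < k" "j < k" "i \<noteq> j" "cols M ! i = cols M ! j"
      using M by (auto simp: distinct_conv_nth)
    define v :: "'a vec" where "v = unit_vec k i - unit_vec k j"
    have vc: "v \<in> carrier_vec k" unfolding v_def by simp
    have "v $ i = 1" using ij unfolding v_def by simp
    hence "v \<noteq> 0\<^sub>v k" using ij by auto
    moreover have "M *\<^sub>v v = 0\<^sub>v n"
    proof
      show "dim_vec (M *\<^sub>v v) = dim_vec (0\<^sub>v n)" using M by simp
      fix r assume "r < dim_vec (0\<^sub>v n)"
      hence r: "r < n" by simp
      have e: "M $$ (r,i) = M $$ (r,j)" using ij r M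
        by (metis carrier_matD cols_nth index_col)
      have "(M *\<^sub>v v) $ r = (\<Sum>l<k. M$$(r,l) * v$l)"
        using r M vc by (auto simp: mult_mat_vec_def scalar_prod_def lessThan_atLeast0 intro!: sum.cong)
      also have "\<dots> = (\<Sum>l<k. M$$(r,l) * (if l = i then 1 else 0)) - (\<Sum>l<k. M$$(r,l) * (if l = j then 1 else 0))"
        unfolding v_def by (simp add: sum_subtractf[symmetric] algebra_simps unit_vec_def)
      also have "\<dots> = 0" using ij e by (simp add: if_distrib[of "\<lambda>x. _ * x"] sum.delta cong: if_cong)
      finally show "(M *\<^sub>v v) $ r = 0\<^sub>v n $ r" using r by simp
    qed
    ultimately show False using Mv vc by blast
  qed
  have li: "lin_indpt (set (cols M))"
  proof
    assume "lin_dep (set (cols M))"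
    then obtain v where "v \<in> carrier_vec k" "v \<noteq> 0\<^sub>v k" "M *\<^sub>v v = 0\<^sub>v n"
      using lin_depE[OF M _ dist] by blast
    thus False using Mv by blast
  qed
  have sub: "set (cols M) \<subseteq> set (cols A)"
  proof
    fix x assume "x \<in> set (cols M)"
    then obtain i where i: "i < k" "x = cols M ! i" using M by (auto simp: in_set_conv_nth)
    hence "x = col A (f i)" using colM M by simp
    thus "x \<in> set (cols A)" using f i A by (auto simp: in_set_conv_nth intro!: exI[of _ "f i"])
  qed
  have "card (set (cols M)) = k" using dist M by (simp add: distinct_card)
  thus ?thesis using rank_ge_card_indpt[OF A sub li] by simp
qed


lemma closed_contra:
  assumes sc: "strongly_connected m J" and u: "u < m" "u \<in> S" and h: "h < m" "h \<notin> S"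
    and cl: "\<And>x y. x \<in> S \<Longrightarrow> (x,y) \<in> J \<Longrightarrow> y \<in> S"
  shows False
proof -
  have "(u,h) \<in> J\<^sup>*" using sc u h unfolding strongly_connected_def by blast
  hence "h \<in> S" by (induction rule: rtrancl_induct) (use u cl in auto)
  thus False using h by simp
qed

lemma sum_c:
  fixes w :: "nat \<Rightarrow> complex"
  assumes "x < m" "y < m" "x \<noteq> y"
  shows "(\<Sum>i<m. (if i = x then -1 else if i = y then 1 else 0) * w i) = w y - w x"
proof -
  have "(\<Sum>i<m. (if i = x then -1 else if i = y then 1 else 0) * w i)
      = (\<Sum>i<m. (if i = y then w y else 0) + (if x = i then - w x else 0))"
    using assms by (intro sum.cong) auto
  also have "\<dots> = w y - w x" using assms by (simp add: sum.distrib)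
  finally show ?thesis .
qed

theorem lemma2:
  fixes m :: nat and J :: "(nat \<times> nat) set"
  assumes arcs: "J \<subseteq> {..<m} \<times> {..<m}"
    and no_loops: "\<forall>(i, j) \<in> J. i \<noteq> j"
    and sc: "strongly_connected m J"
  shows "\<forall>Cs. Cs \<noteq> {} \<and> Cs \<subset> J \<longrightarrow> complementary_complete m J Cs"
proof (intro allI impI)
  fix Cs assume Cs: "Cs \<noteq> {} \<and> Cs \<subset> J"
  have finJ: "finite J" using arcs finite_subset by blast
  have finC: "finite Cs" using Cs finJ finite_subset by blast
  define ds where "ds = sorted_list_of_set (J - Cs)"
  define cs where "cs = sorted_list_of_set Cs"
  have setds: "set ds = J - Cs" unfolding ds_def using finJ by simp
  have setcs: "set cs = Cs" unfolding cs_def using finC by simp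
  define p where "p = length ds"
  define q where "q = length cs"
  define Cm where "Cm = C_mat m ds"
  define Bm where "Bm = B_mat m cs"
  define H where "H = fst ` Cs"
  have Cdim[simp]: "dim_row Cm = p" "dim_col Cm = m" unfolding Cm_def C_mat_def p_def by auto
  have Bdim[simp]: "dim_row Bm = m" "dim_col Bm = q" unfolding Bm_def B_mat_def q_def by auto
  have Cent: "Cm $$ (a, i) = (if i = fst (ds!a) then -1 else if i = snd (ds!a) then 1 else 0)"
    if "a < p" "i < m" for a i
    using that unfolding Cm_def C_mat_def mat_of_rows_def c_row_def p_def by (simp add: case_prod_beta)
  have Bent: "Bm $$ (r, t) = (if r = fst (cs!t) then 1 else 0)" if "r < m" "t < q" for r t
    using that unfolding Bm_def B_mat_def mat_of_cols_def b_vec_def q_def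
    by (simp add: case_prod_beta unit_vec_def)
  have dsin: "ds ! a \<in> J - Cs" if "a < p" for a using that setds p_def nth_mem by blast
  have csin: "cs ! t \<in> Cs" if "t < q" for t using that setcs q_def nth_mem by blast
  have Hm: "h < m" if "h \<in> H" for h using that Cs arcs unfolding H_def by auto
  have Hidx: "\<exists>t<q. fst (cs ! t) = h" if "h \<in> H" for h
    using that setcs unfolding H_def q_def by (auto simp: in_set_conv_nth) (metis fst_conv)
  obtain h l where hl: "(h,l) \<in> Cs" using Cs by auto
  have "\<exists>x y. (x,y) \<in> J - Cs \<and> (x \<in> H \<or> y \<in> H)"
  proof (rule ccontr)
    assume nex: "\<not> ?thesis"
    obtain x y where xy: "(x,y) \<in> J - Cs" using Cs by auto
    show False
    proof (rule closed_contra[OF sc, of x "{x. x<m \<and> x \<notin> H}" h])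
      show "x < m" "x \<in> {x. x<m \<and> x \<notin> H}" using xy nex arcs by auto
      show "h < m" using hl arcs Cs by blast
      show "h \<notin> {x. x<m \<and> x \<notin> H}" using hl H_def by force
      fix a b assume "a \<in> {x. x<m \<and> x \<notin> H}" "(a,b) \<in> J"
      then show "b \<in> {x. x<m \<and> x \<notin> H}" using nex arcs unfolding H_def by force
    qed
  qed
  then obtain x y where xy: "(x,y) \<in> J - Cs" "x \<in> H \<or> y \<in> H" by blast
  obtain a where a: "a < p" "ds ! a = (x,y)" using xy setds unfolding p_def by (metis in_set_conv_nth)
  obtain z where z: "z \<in> H" "z = x \<or> z = y" using xy by blast
  obtain t where t: "t < q" "fst (cs ! t) = z" using Hidx[OF z(1)] by blast
  have xym: "x < m" "y < m" "x \<noteq> y" using xy arcs no_loops by auto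
  have "(Cm * Bm) $$ (a, t) = (\<Sum>i<m. Cm $$ (a,i) * Bm $$ (i,t))"
    using a t by (simp add: scalar_prod_def row_def col_def lessThan_atLeast0)
  also have "\<dots> = (\<Sum>i<m. if i = z then Cm $$ (a,z) else 0)"
    using a t Bent Cent by (intro sum.cong) auto
  also have "\<dots> = Cm $$ (a,z)" using Hm z by simp
  also have "\<dots> \<noteq> 0" using Cent[OF a(1) Hm[OF z(1)]] a z xym by auto
  finally have ne: "(Cm * Bm) $$ (a, t) \<noteq> 0" .
  have part1: "\<exists>s. s \<noteq> 0 \<and> transfer_mat m Cm Bm s \<noteq> 0\<^sub>m (dim_row Cm) (dim_col Bm)"
  proof (intro exI conjI)
    have tr: "transfer_mat m Cm Bm 1 = Cm * Bm"
      proof -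
        have "(1::complex) \<cdot>\<^sub>m 1\<^sub>m m = 1\<^sub>m m" by (rule eq_matI) auto
        thus ?thesis unfolding transfer_mat_def by simp
      qed
    show "transfer_mat m Cm Bm 1 \<noteq> 0\<^sub>m (dim_row Cm) (dim_col Bm)"
    proof
      assume "transfer_mat m Cm Bm 1 = 0\<^sub>m (dim_row Cm) (dim_col Bm)"
      hence "(Cm * Bm) $$ (a, t) = (0\<^sub>m p q :: complex mat) $$ (a, t)" using tr by simp
      thus False using ne a t by simp
    qed
  qed simp
  have part2: "vec_space.rank (m + dim_row Cm) (pencil m Cm Bm l) \<ge> m" for l
  proof -
    define P where "P = pencil m Cm Bm l"
    have Pc: "P \<in> carrier_mat (m + p) (m + q)" unfolding P_def pencil_def by auto
    have Pent: "P $$ (r, c) = (if r < m then if c < m then (if r = c then l else 0) else Bm $$ (r, c - m)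
       else if c < m then Cm $$ (r - m, c) else 0)" if "r < m + p" "c < m + q" for r c
      using that unfolding P_def pencil_def by simp
    show ?thesis
    proof (cases "l = 0")
      case False
      have "m \<le> vec_space.rank (m + p) P"
      proof (rule rank_ge_sel[OF Pc, of m id])
        fix v :: "complex vec" assume v: "v \<in> carrier_vec m"
          and z: "\<And>r. r < m + p \<Longrightarrow> (\<Sum>i<m. P $$ (r, id i) * v $ i) = 0"
        show "v = 0\<^sub>v m"
        proof (rule eq_vecI)
          fix r assume "r < dim_vec (0\<^sub>v m)"
          hence r: "r < m" by simp
          have "(\<Sum>i<m. P $$ (r, id i) * v $ i) = (\<Sum>i<m. if i = r then l * v $ r else 0)"
            using r by (intro sum.cong) (auto simp: Pent)
          also have "\<dots> = l * v $ r" using r by simp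
          finally show "v $ r = 0\<^sub>v m $ r" using z[of r] r False by simp
        qed (use v in simp)
      qed auto
      thus ?thesis unfolding P_def by simp
    next
      case True
      define idx where "idx k = (SOME t. t < q \<and> fst (cs ! t) = k)" for k
      have idx: "idx k < q" "fst (cs ! idx k) = k" if "k \<in> H" for k
        using someI_ex[OF Hidx[OF that]] unfolding idx_def by auto
      define f where "f k = (if k \<in> H then m + idx k else k)" for k
      have "m \<le> vec_space.rank (m + p) P"
      proof (rule rank_ge_sel[OF Pc, of m f])
        show "\<forall>i<m. f i < m + q" using idx unfolding f_def by auto
        fix v :: "complex vec" assume v: "v \<in> carrier_vec m"
          and z: "\<And>r. r < m + p \<Longrightarrow> (\<Sum>i<m. P $$ (r, f i) * v $ i) = 0"
        have vH: "v $ r = 0" if r: "r \<in> H" for r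
        proof -
          have rm: "r < m" using Hm r .
          have "(\<Sum>i<m. P $$ (r, f i) * v $ i) = (\<Sum>i<m. if i = r then v $ r else 0)"
          proof (intro sum.cong refl)
            fix i assume i: "i \<in> {..<m}"
            show "P $$ (r, f i) * v $ i = (if i = r then v $ r else 0)"
            proof (cases "i \<in> H")
              case True
              then show ?thesis using i rm idx[OF True] True
                by (auto simp: f_def Pent Bent)
            next
              case False
              then show ?thesis using i rm r True by (auto simp: f_def Pent)
            qed
          qed
          also have "\<dots> = v $ r" using rm by simp
          finally show ?thesis using z[of r] rm by simp
        qed
        have vJ: "v $ x = v $ y" if xy: "(x,y) \<in> J - Cs" for x y
        proof -
          obtain a where a: "a < p" "ds ! a = (x,y)" using xy setds unfolding p_def by (metis in_set_conv_nth)
          have xym: "x < m" "y < m" "x \<noteq> y" using xy arcs no_loops by auto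
          have "(\<Sum>i<m. P $$ (m + a, f i) * v $ i)
              = (\<Sum>i<m. (if i = x then -1 else if i = y then 1 else 0) * (\<lambda>i. v $ i) i)"
          proof (intro sum.cong refl)
            fix i assume i: "i \<in> {..<m}"
            show "P $$ (m + a, f i) * v $ i = (if i = x then -1 else if i = y then 1 else 0) * (\<lambda>i. v $ i) i"
            proof (cases "i \<in> H")
              case True
              then show ?thesis using i a idx[OF True] vH[OF True]
                by (auto simp: f_def Pent)
            next
              case False
              then show ?thesis using i a by (auto simp: f_def Pent Cent)
            qed
          qed
          also have "\<dots> = v $ y - v $ x" by (rule sum_c[OF xym])
          finally show ?thesis using z[of "m + a"] a by simp
        qed
        show "v = 0\<^sub>v m"
        proof (rule ccontr)
          assume "v \<noteq> 0\<^sub>v m"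
          then obtain k where k: "k < m" "v $ k \<noteq> 0" using v by (metis carrier_vecD eq_vecI index_zero_vec)
          have hH: "h \<in> H" using hl H_def by force
          show False
          proof (rule closed_contra[OF sc, of k "{x. x<m \<and> v $ x = v $ k}" h])
            show "k < m" "k \<in> {x. x<m \<and> v $ x = v $ k}" using k by auto
            show "h < m" "h \<notin> {x. x<m \<and> v $ x = v $ k}" using Hm[OF hH] vH[OF hH] k by auto
            fix a b assume ab: "a \<in> {x. x<m \<and> v $ x = v $ k}" "(a,b) \<in> J"
            have "a \<notin> H" using ab k vH by auto
            hence "(a,b) \<in> J - Cs" using ab unfolding H_def by force
            then show "b \<in> {x. x<m \<and> v $ x = v $ k}" using ab vJ arcs by auto
          qed
        qed
      qed
      thus ?thesis unfolding P_def by simp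
    qed
  qed
  show "complementary_complete m J Cs"
    unfolding complementary_complete_def complete_triple_def
    using part1 part2 unfolding Cm_def Bm_def ds_def cs_def by blast
qed

end
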